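(* Let $n,m$ be integers with $m\geq 1$ and $n\geq 6m+7$. Then $$ gr_{3}(K_{3} : S(n,m)) = \begin{cases} 5\cdot\frac{n}{2} +1 & \text{ if $n$ is even,}\\ 5\cdot\frac{n-1}{2} + 2 & \text{ if $n$ is odd.} \end{cases} $$
   Context: For integers $n\geq m\geq 0$, the double star $S(n,m)$ is the graph obtained from the disjoint union of the stars $K_{1,n}$ and $K_{1,m}$ by adding an edge between their centers. A $k$-coloring of a graph is an assignment of one of $k$ colors to each edge. A subgraph is rainbow if all its edges have distinct colors and monochromatic if all its edges have the same color. For graphs $G,H$ and a positive integer $k$, the Gallai–Ramsey number $gr_k(G:H)$ is the minimum integer $N$ such that every $k$-coloring of the edges of the complete graph $K_N$ contains either a rainbow copy of $G$ or a monochromatic copy of $H$. *)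

theory Defs
  imports Main
begin

text \<open>Vertices of K_N are 0..N-1. An edge k-coloring of K_N is a symmetric function
  c on pairs of distinct vertices with values in {0..k-1} (values on the diagonal
  and outside the vertex set are irrelevant).\<close>

definition edge_coloring :: "nat \<Rightarrow> nat \<Rightarrow> (nat \<Rightarrow> nat \<Rightarrow> nat) \<Rightarrow> bool" where
  "edge_coloring k N c \<longleftrightarrow>
     (\<forall>x<N. \<forall>y<N. x \<noteq> y \<longrightarrow> c x y = c y x \<and> c x y < k)"

definition has_rainbow_K3 :: "nat \<Rightarrow> (nat \<Rightarrow> nat \<Rightarrow> nat) \<Rightarrow> bool" where
  "has_rainbow_K3 N c \<longleftrightarrow>
     (\<exists>x<N. \<exists>y<N. \<exists>z<N. x \<noteq> y \<and> y \<noteq> z \<and> x \<noteq> z \<and>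
        c x y \<noteq> c y z \<and> c y z \<noteq> c x z \<and> c x y \<noteq> c x z)"

definition has_mono_double_star :: "nat \<Rightarrow> nat \<Rightarrow> nat \<Rightarrow> (nat \<Rightarrow> nat \<Rightarrow> nat) \<Rightarrow> bool" where
  "has_mono_double_star n m N c \<longleftrightarrow>
     (\<exists>u<N. \<exists>v<N. \<exists>A B. u \<noteq> v \<and> A \<subseteq> {..<N} \<and> B \<subseteq> {..<N} \<and>
        card A = n \<and> card B = m \<and> A \<inter> B = {} \<and>
        u \<notin> A \<union> B \<and> v \<notin> A \<union> B \<and>
        (\<forall>a\<in>A. c u a = c u v) \<and> (\<forall>b\<in>B. c v b = c u v))"

definition gr_K3_double_star :: "nat \<Rightarrow> nat \<Rightarrow> nat \<Rightarrow> nat" where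
  "gr_K3_double_star k n m =
     (LEAST N. \<forall>c. edge_coloring k N c \<longrightarrow> has_rainbow_K3 N c \<or> has_mono_double_star n m N c)"

end

theory Submission
  imports Defs
begin


locale G =
  fixes N :: nat and c :: "nat \<Rightarrow> nat \<Rightarrow> nat"
  assumes sym: "\<And>x y. x < N \<Longrightarrow> y < N \<Longrightarrow> x \<noteq> y \<Longrightarrow> c x y = c y x"
  and lt3: "\<And>x y. x < N \<Longrightarrow> y < N \<Longrightarrow> x \<noteq> y \<Longrightarrow> c x y < 3"
  and norb: "\<And>x y z. x < N \<Longrightarrow> y < N \<Longrightarrow> z < N \<Longrightarrow> x \<noteq> y \<Longrightarrow> y \<noteq> z \<Longrightarrow> x \<noteq> z
      \<Longrightarrow> c x y = c y z \<or> c y z = c x z \<or> c x y = c x z"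
begin

definition closed :: "nat \<Rightarrow> nat set \<Rightarrow> nat set \<Rightarrow> bool" where
  "closed g S T \<longleftrightarrow> T \<subseteq> S \<and> (\<forall>x\<in>T. \<forall>y\<in>S-T. c x y \<noteq> g)"

definition comp :: "nat \<Rightarrow> nat set \<Rightarrow> nat \<Rightarrow> nat set" where
  "comp g S u = \<Inter>{T. closed g S T \<and> u \<in> T}"

lemma closed_S: "closed g S S" by (auto simp: closed_def)

lemma comp_closed: "u \<in> S \<Longrightarrow> closed g S (comp g S u)"
  unfolding closed_def comp_def
  apply (intro conjI)
  subgoal by (auto simp: closed_def)
  subgoal by (clarsimp simp: closed_def) blast
  done

lemma comp_in: "u \<in> S \<Longrightarrow> u \<in> comp g S u"
  by (auto simp: comp_def)

lemma comp_least: "closed g S T \<Longrightarrow> u \<in> T \<Longrightarrow> comp g S u \<subseteq> T"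
  by (auto simp: comp_def)

lemma comp_sub: "u \<in> S \<Longrightarrow> comp g S u \<subseteq> S"
  using comp_closed closed_def by blast

lemma closed_diff:
  assumes "S \<subseteq> {..<N}" "closed g S X" "closed g S Y"
  shows "closed g S (X - Y)"
  unfolding closed_def
proof (intro conjI ballI)
  show "X - Y \<subseteq> S" using assms(2) by (auto simp: closed_def)
  fix x y assume x: "x \<in> X - Y" and y: "y \<in> S - (X - Y)"
  show "c x y \<noteq> g"
  proof (cases "y \<in> X")
    case False then show ?thesis using assms(2) x y by (auto simp: closed_def)
  next
    case True
    then have "y \<in> Y" using y by auto
    have xS: "x \<in> S" using x assms(2) by (auto simp: closed_def)
    have "c y x \<noteq> g" using assms(3) \<open>y \<in> Y\<close> x xS by (auto simp: closed_def)
    moreover have "x \<noteq> y" using x \<open>y \<in> Y\<close> by auto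
    moreover have "x < N" "y < N" using xS y assms(1) by auto
    ultimately show ?thesis using sym by metis
  qed
qed

lemma comp_eq:
  assumes "S \<subseteq> {..<N}" "u \<in> S" "w \<in> comp g S u"
  shows "comp g S w = comp g S u"
proof -
  have wS: "w \<in> S" using assms comp_sub by blast
  have 1: "comp g S w \<subseteq> comp g S u" using comp_least comp_closed assms by blast
  have "u \<in> comp g S w"
  proof (rule ccontr)
    assume "u \<notin> comp g S w"
    then have "closed g S (comp g S u - comp g S w)" "u \<in> comp g S u - comp g S w"
      using closed_diff comp_closed assms wS comp_in by auto
    then have "comp g S u \<subseteq> comp g S u - comp g S w" using comp_least by blast
    then show False using assms(3) comp_in wS by blast
  qed
  then have "comp g S u \<subseteq> comp g S w" using comp_least comp_closed wS by blast
  with 1 show ?thesis by auto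
qed

lemma comp_disj:
  assumes "S \<subseteq> {..<N}" "u \<in> S" "w \<in> S" "w \<notin> comp g S u" "t \<in> comp g S w"
  shows "t \<notin> comp g S u"
proof
  assume "t \<in> comp g S u"
  then have "comp g S t = comp g S u" using comp_eq assms by blast
  moreover have "comp g S t = comp g S w" using comp_eq assms by blast
  ultimately show False using assms comp_in by blast
qed

lemma comp_cross:
  assumes "u \<in> S" "w \<in> S" "w \<notin> comp g S u"
  shows "c u w \<noteq> g"
  using comp_closed[OF assms(1), of g] comp_in[OF assms(1)] assms by (auto simp: closed_def)

lemma module:
  assumes SV: "S \<subseteq> {..<N}" and u: "u \<in> S" and w: "w \<in> S" "w \<notin> comp g S u"
    and t1: "t1 \<in> comp g S u" and t2: "t2 \<in> comp g S u"
  shows "c w t1 = c w t2"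
proof (rule ccontr)
  assume ne: "c w t1 \<noteq> c w t2"
  define C where "C = comp g S u"
  define P where "P = {t \<in> C. c w t = c w t1}"
  have CS: "C \<subseteq> S" using comp_sub u C_def by auto
  have Cc: "closed g S C" using comp_closed u C_def by auto
  have wC: "\<And>t. t \<in> C \<Longrightarrow> c w t \<noteq> g"
  proof -
    fix t assume t: "t \<in> C"
    have "c t w \<noteq> g" using Cc t w C_def by (auto simp: closed_def)
    moreover have "t \<noteq> w" using t w C_def by auto
    moreover have "t < N" "w < N" using t CS w SV by auto
    ultimately show "c w t \<noteq> g" using sym by metis
  qed
  have Pc: "closed g S P"
    unfolding closed_def
  proof (intro conjI ballI)
    show "P \<subseteq> S" using CS P_def by auto
    fix x y assume x: "x \<in> P" and y: "y \<in> S - P"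
    show "c x y \<noteq> g"
    proof (cases "y \<in> C")
      case False then show ?thesis using Cc x y P_def by (auto simp: closed_def)
    next
      case True
      then have yne: "c w y \<noteq> c w x" using x y P_def by auto
      have xC: "x \<in> C" using x P_def by auto
      have d: "w \<noteq> x" "x \<noteq> y" "w \<noteq> y" using w xC True x y C_def by auto
      have lt: "w < N" "x < N" "y < N" using w xC True CS SV by auto
      show ?thesis
      proof
        assume "c x y = g"
        with norb[OF lt d] wC[OF xC] wC[OF True] yne show False by auto
      qed
    qed
  qed
  have Qc: "closed g S (C - P)" using closed_diff SV Cc Pc by auto
  show False
  proof (cases "u \<in> P")
    case True
    then have "C \<subseteq> P" using comp_least Pc C_def by blast
    then show False using t2 ne P_def C_def by auto
  next
    case False
    then have "C \<subseteq> C - P" using comp_least Qc C_def comp_in u by blast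
    then show False using t1 P_def C_def by auto
  qed
qed

end

context G begin

lemma disc_comp:
  assumes "S \<subseteq> {..<N}" "T \<noteq> {}" "T \<subset> S" "closed g S T" "u \<in> S"
  shows "\<exists>w\<in>S. w \<notin> comp g S u"
proof (cases "u \<in> T")
  case True
  then have "comp g S u \<subseteq> T" using comp_least assms by blast
  then show ?thesis using assms by blast
next
  case False
  obtain w where w: "w \<in> T" using assms by blast
  have "w \<notin> comp g S u"
  proof
    assume "w \<in> comp g S u"
    then have "comp g S w = comp g S u" using comp_eq assms by blast
    moreover have "comp g S w \<subseteq> T" using comp_least assms w by blast
    ultimately show False using comp_in assms False by blast
  qed
  then show ?thesis using w assms by blast
qed

lemma third_color:
  assumes "a < 3" "b < (3::nat)"
  shows "\<exists>d<3. d \<noteq> a \<and> d \<noteq> b"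
  using assms by presburger

lemma gallai_step:
  assumes FV: "insert x F \<subseteq> {..<N}" and xF: "x \<notin> F" and g3: "g < 3"
    and T: "T \<noteq> {}" "T \<subset> F" "closed g F T"
  shows "\<exists>g<3. \<exists>T. T \<noteq> {} \<and> T \<subset> insert x F \<and> closed g (insert x F) T"
proof -
  have FV': "F \<subseteq> {..<N}" using FV by auto
  have xN: "x < N" using FV by auto
  let ?K = "comp g F"
  show ?thesis
  proof (cases "\<exists>w\<in>F. \<forall>t\<in>?K w. c x t \<noteq> g")
    case True
    then obtain w where w: "w \<in> F" "\<forall>t\<in>?K w. c x t \<noteq> g" by blast
    have "closed g (insert x F) (?K w)"
      unfolding closed_def
    proof (intro conjI ballI)
      show "?K w \<subseteq> insert x F" using comp_sub w by auto
      fix a y assume a: "a \<in> ?K w" and y: "y \<in> insert x F - ?K w"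
      have aF: "a \<in> F" using a comp_sub w by auto
      show "c a y \<noteq> g"
      proof (cases "y = x")
        case True
        then have "c x a \<noteq> g" using w a by auto
        moreover have "a \<noteq> x" using aF xF by auto
        ultimately show ?thesis using sym[of a x] aF FV' xN True by auto
      next
        case False
        then show ?thesis using comp_closed[OF w(1), of g] a y by (auto simp: closed_def)
      qed
    qed
    moreover have "?K w \<noteq> {}" using comp_in w by blast
    moreover have "?K w \<subset> insert x F" using comp_sub w xF by blast
    ultimately show ?thesis using g3 by blast
  next
    case False
    then have hasg: "\<forall>w\<in>F. \<exists>t\<in>?K w. c x t = g" by blast
    have other: "\<forall>b\<in>F. \<exists>w\<in>F. w \<notin> ?K b"
      using disc_comp[OF FV' T(1) T(2) T(3)] by (intro ballI)
    have key: "c x b = c x d" if b: "b \<in> F" "c x b \<noteq> g" and d: "d \<in> F" "c x d \<noteq> g" for b d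
    proof (rule ccontr)
      assume ne: "c x b \<noteq> c x d"
      have bN: "b < N" and dN: "d < N" using b d FV' by auto
      have tri: "c a y = c x y" if a: "a \<in> F" "c x a = g" "a \<notin> ?K y" and y: "y \<in> F" "c x y \<noteq> g" for a y
      proof -
        have "c y a \<noteq> g" using comp_cross[OF y(1) a(1) a(3)] .
        moreover have "a \<noteq> y" using a y comp_in by blast
        moreover have aN: "a < N" "y < N" using a y FV' by auto
        ultimately have cay: "c a y \<noteq> g" using sym by metis
        have "x \<noteq> a" "a \<noteq> y" "x \<noteq> y" using a y xF comp_in by blast+
        from norb[OF xN aN this] cay a(2) y(2) show ?thesis by auto
      qed
      show False
      proof (cases "d \<in> ?K b")
        case True
        obtain w where w: "w \<in> F" "w \<notin> ?K b" using other b by blast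
        obtain a where a: "a \<in> ?K w" "c x a = g" using hasg w by blast
        have aF: "a \<in> F" using a comp_sub w by auto
        have anb: "a \<notin> ?K b" using comp_disj[OF FV' b(1) w a(1)] .
        have "c a b = c x b" using tri[OF aF a(2) anb b] .
        moreover have "?K d = ?K b" using comp_eq FV' b True by blast
        then have "a \<notin> ?K d" using anb by simp
        then have "c a d = c x d" using tri[OF aF a(2) _ d] by blast
        moreover have "c a b = c a d" using module[OF FV' b(1) aF anb comp_in[OF b(1)] True] .
        ultimately show False using ne by simp
      next
        case False
        have bnd: "b \<notin> ?K d"
        proof
          assume "b \<in> ?K d"
          then have "?K b = ?K d" using comp_eq FV' d by blast
          then show False using False comp_in d by blast
        qed
        obtain a where a: "a \<in> ?K d" "c x a = g" using hasg d by blast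
        have aF: "a \<in> F" using a comp_sub d by auto
        have anb: "a \<notin> ?K b" using comp_disj[OF FV' b(1) d(1) False a(1)] .
        have 1: "c a b = c x b" using tri[OF aF a(2) anb b] .
        have 2: "c b a = c b d" using module[OF FV' d(1) b(1) bnd a(1) comp_in[OF d(1)]] .
        obtain a' where a': "a' \<in> ?K b" "c x a' = g" using hasg b by blast
        have a'F: "a' \<in> F" using a' comp_sub b by auto
        have a'nd: "a' \<notin> ?K d" using comp_disj[OF FV' d(1) b(1) bnd a'(1)] .
        have 3: "c a' d = c x d" using tri[OF a'F a'(2) a'nd d] .
        have 4: "c d a' = c d b" using module[OF FV' b(1) d(1) False a'(1) comp_in[OF b(1)]] .
        have "a \<noteq> b" using anb comp_in b by blast
        have "a' \<noteq> d" using a'nd comp_in d by blast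
        have "b \<noteq> d" using False comp_in b by blast
        have aN: "a < N" "a' < N" using aF a'F FV' by auto
        have "c b a = c a b" using sym aN bN \<open>a \<noteq> b\<close> by metis
        moreover have "c d a' = c a' d" using sym aN dN \<open>a' \<noteq> d\<close> by metis
        moreover have "c b d = c d b" using sym bN dN \<open>b \<noteq> d\<close> by metis
        ultimately show False using 1 2 3 4 ne by simp
      qed
    qed
    show ?thesis
    proof (cases "\<exists>b\<in>F. c x b \<noteq> g")
      case True
      then obtain b where b: "b \<in> F" "c x b \<noteq> g" by blast
      have "c x b < 3" using lt3 xN b FV' xF by blast
      then obtain d where d: "d < 3" "d \<noteq> g" "d \<noteq> c x b" using third_color g3 by blast
      have "closed d (insert x F) {x}"
        unfolding closed_def
      proof (intro conjI ballI)
        fix a y assume "a \<in> {x}" "y \<in> insert x F - {x}"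
        then have "a = x" "y \<in> F" by auto
        then show "c a y \<noteq> d" using key[OF b, of y] d by (cases "c x y = g") auto
      qed auto
      moreover have "{x} \<subset> insert x F" using T xF by auto
      ultimately show ?thesis using d by blast
    next
      case False
      obtain d where d: "d < 3" "d \<noteq> g" using third_color g3 by blast
      have "closed d (insert x F) {x}"
        unfolding closed_def using False d by auto
      moreover have "{x} \<subset> insert x F" using T xF by auto
      ultimately show ?thesis using d by blast
    qed
  qed
qed

lemma gallai:
  assumes "finite S" "S \<subseteq> {..<N}" "2 \<le> card S"
  shows "\<exists>g<3. \<exists>T. T \<noteq> {} \<and> T \<subset> S \<and> closed g S T"
  using assms
proof (induction S rule: finite_induct)
  case empty then show ?case by simp
next
  case (insert x F)
  show ?case
  proof (cases "2 \<le> card F")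
    case True
    then obtain g T where gT: "g < 3" "T \<noteq> {}" "T \<subset> F" "closed g F T"
      using insert.IH insert.prems by auto
    show ?thesis using gallai_step[OF insert.prems(1) insert.hyps(2) gT] .
  next
    case False
    then have "card F = 1" using insert by auto
    then obtain a where a: "F = {a}" using card_1_singletonE by blast
    have "x < N" "a < N" "x \<noteq> a" using insert a by auto
    then have "c x a < 3" using lt3 by blast
    then obtain d where d: "d < 3" "d \<noteq> c x a" using third_color[of 0 0] by (metis third_color)
    have "closed d (insert x F) {x}" unfolding closed_def using a d by auto
    moreover have "{x} \<subset> insert x F" using a \<open>x \<noteq> a\<close> by auto
    ultimately show ?thesis using d by blast
  qed
qed

end


lemma disj_sub:
  fixes A B :: "'a set"
  assumes "finite A" "finite B" "card A \<ge> n" "card B \<ge> m" "card (A \<union> B) \<ge> n + m"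
  shows "\<exists>A' B'. A' \<subseteq> A \<and> B' \<subseteq> B \<and> card A' = n \<and> card B' = m \<and> A' \<inter> B' = {}"
proof (cases "card (B - A) \<ge> m")
  case True
  obtain B' where B': "B' \<subseteq> B - A" "card B' = m" using obtain_subset_with_card_n[OF True] by metis
  obtain A' where A': "A' \<subseteq> A" "card A' = n" using obtain_subset_with_card_n[OF assms(3)] by metis
  show ?thesis using A' B' by (intro exI[of _ A'] exI[of _ B']) auto
next
  case False
  have fin: "finite (B - A)" "finite (B \<inter> A)" using assms by auto
  have cB: "card B = card (B - A) + card (B \<inter> A)"
    using card_Un_disjoint[OF fin] by (metis Diff_partition Int_Diff_Un Int_commute Un_commute inf_le2 Int_Diff_disjoint)
  have "m - card (B - A) \<le> card (B \<inter> A)" using cB assms(4) by linarith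
  then obtain C where C: "C \<subseteq> B \<inter> A" "card C = m - card (B - A)" using obtain_subset_with_card_n by metis
  have cU: "card (A \<union> B) = card A + card (B - A)"
    using card_Un_disjoint[of A "B - A"] assms by (metis Un_Diff_cancel Diff_disjoint finite_Diff)
  have finC: "finite C" using C fin finite_subset by blast
  have "card (A - C) = card A - card C" using card_Diff_subset[OF finC] C by auto
  then have "card (A - C) \<ge> n" using C cU assms(5) False by linarith
  then obtain A' where A': "A' \<subseteq> A - C" "card A' = n" using obtain_subset_with_card_n by metis
  define B' where "B' = (B - A) \<union> C"
  have "card B' = card (B - A) + card C"
    unfolding B'_def using card_Un_disjoint[OF fin(1) finC] C by auto
  then have "card B' = m" using C False by linarith
  moreover have "B' \<subseteq> B" using C B'_def by auto
  moreover have "A' \<inter> B' = {}" using A' C B'_def by auto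
  ultimately show ?thesis using A' by (intro exI[of _ A'] exI[of _ B']) auto
qed

locale G2 = G +
  fixes n m :: nat
  assumes nods: "\<not> has_mono_double_star n m N c"
  and m1: "m \<ge> 1" and nm: "n \<ge> 6*m+7"
  and hN: "N = (if even n then 5*(n div 2)+1 else 5*((n-1) div 2)+2)"
begin

definition nb :: "nat \<Rightarrow> nat set \<Rightarrow> nat \<Rightarrow> nat set" where
  "nb k S u = {w \<in> S. w \<noteq> u \<and> c u w = k}"

lemma nb_fin: "S \<subseteq> {..<N} \<Longrightarrow> finite (nb k S u)"
  unfolding nb_def by (rule finite_subset[of _ "{..<N}"]) auto

lemma nb_mono: "S \<subseteq> S' \<Longrightarrow> nb k S u \<subseteq> nb k S' u"
  unfolding nb_def by auto

lemma numfacts: "5*n \<le> 2*N + 1" "N \<ge> 2*n + 3*m + 3" "3*(N - 2*n) > n" "N > 2*n"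
  using hN nm by (cases "even n"; auto elim!: evenE oddE; linarith)+

lemma DSU:
  assumes u: "u < N" and v: "v < N" and uv: "u \<noteq> v" and cuv: "c u v = k"
    and A: "A \<subseteq> nb k {..<N} u - {v}" and B: "B \<subseteq> nb k {..<N} v - {u}"
    and cA: "card A \<ge> n" and cB: "card B \<ge> m" and cAB: "card (A \<union> B) \<ge> n + m"
  shows False
proof -
  have fA: "finite A" "finite B" using A B nb_fin finite_subset by blast+
  obtain A' B' where AB': "A' \<subseteq> A" "B' \<subseteq> B" "card A' = n" "card B' = m" "A' \<inter> B' = {}"
    using disj_sub[OF fA cA cB cAB] by blast
  have h: "A' \<subseteq> {..<N}" "B' \<subseteq> {..<N}" "u \<notin> A' \<union> B'" "v \<notin> A' \<union> B'"
    "\<forall>a\<in>A'. c u a = c u v" "\<forall>b\<in>B'. c v b = c u v"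
    using AB' A B uv cuv unfolding nb_def by auto
  have "has_mono_double_star n m N c"
    unfolding has_mono_double_star_def using h AB' u v uv by blast
  then show False using nods by blast
qed

lemma DSU':
  assumes S: "S \<subseteq> {..<N}" and u: "u \<in> S" and v: "v \<in> nb k S u"
    and A: "A \<subseteq> nb k S u - {v}" and B: "B \<subseteq> nb k S v - {u}"
    and cA: "card A \<ge> n" and cB: "card B \<ge> m" and cAB: "card (A \<union> B) \<ge> n + m"
  shows False
proof -
  have "nb k S u \<subseteq> nb k {..<N} u" "nb k S v \<subseteq> nb k {..<N} v" using S nb_mono by auto
  moreover have "u < N" "v < N" "u \<noteq> v" "c u v = k" using u v S unfolding nb_def by auto
  ultimately show False using DSU[of u v k A B] A B cA cB cAB by blast
qed

lemma F1:
  assumes S: "S \<subseteq> {..<N}" and u: "u \<in> S" and v: "v \<in> nb k S u"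
    and cu: "card (nb k S u) \<ge> n + m + 1" and cv: "card (nb k S v) \<ge> m + 1"
  shows False
proof -
  have f: "finite (nb k S u)" "finite (nb k S v)" using nb_fin S by auto
  have uv: "u \<in> nb k S v"
  proof -
    have "u \<noteq> v" "c u v = k" "v \<in> S" "v < N" "u < N" using v u S unfolding nb_def by auto
    then show ?thesis using u sym unfolding nb_def by auto
  qed
  have a: "card (nb k S u - {v}) \<ge> n + m" using f cu v by (simp add: card_Diff_singleton)
  have b: "card (nb k S v - {u}) \<ge> m" using f cv uv by (simp add: card_Diff_singleton)
  have "card (nb k S u - {v}) \<le> card ((nb k S u - {v}) \<union> (nb k S v - {u}))"
    using f by (intro card_mono) auto
  then show False using DSU'[OF S u v order_refl order_refl _ b] a by linarith
qed

end


lemma dcount: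
  assumes "finite X" "finite Z"
  shows "(\<Sum>v\<in>X. card {z\<in>Z. P v z}) = (\<Sum>z\<in>Z. card {v\<in>X. P v z})"
proof -
  have 1: "\<And>v. card {z\<in>Z. P v z} = (\<Sum>z\<in>Z. if P v z then 1 else 0)"
  proof -
    fix v have "{z\<in>Z. P v z} = Z \<inter> Collect (P v)" by auto
    then show "card {z\<in>Z. P v z} = (\<Sum>z\<in>Z. if P v z then 1 else 0)"
      using assms(2) by (simp add: sum.If_cases)
  qed
  have 2: "\<And>z. card {v\<in>X. P v z} = (\<Sum>v\<in>X. if P v z then 1 else 0)"
  proof -
    fix z have "{v\<in>X. P v z} = X \<inter> {v. P v z}" by auto
    then show "card {v\<in>X. P v z} = (\<Sum>v\<in>X. if P v z then 1 else 0)"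
      using assms(1) by (simp add: sum.If_cases)
  qed
  show ?thesis unfolding 1 2 by (rule sum.swap)
qed

lemma nonlin:
  fixes q m :: nat
  assumes "q \<ge> 6*m+9" "q * q \<le> (2*q + 2*m) * (m - 1)"
  shows False
proof -
  have "(2*q + 2*m) * (m - 1) \<le> (2*q + 2*m) * m" by (intro mult_left_mono) auto
  also have "\<dots> = 2*(q*m) + 2*(m*m)" by (simp add: algebra_simps)
  also have "2*(m*m) \<le> q * m"
  proof -
    have "2*m \<le> q" using assms(1) by linarith
    then have "(2*m)*m \<le> q*m" by (rule mult_right_mono) simp
    then show ?thesis by simp
  qed
  finally have a: "q*q \<le> 3*(q*m)" using assms(2) by linarith
  have "3*(q*m) < q*q" proof -
    have "3*m < q" using assms(1) by linarith
    then have "q * (3*m) < q * q" using assms(1) by (intro mult_strict_left_mono) auto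
    then show ?thesis by (simp add: algebra_simps)
  qed
  with a show False by linarith
qed

context G2 begin

lemma cover:
  assumes S: "S \<subseteq> {..<N}" and y: "y \<in> S" and abd: "a < 3" "b < 3" "d < 3" "a \<noteq> b" "a \<noteq> d" "b \<noteq> d"
  shows "card S \<le> card (nb a S y) + card (nb b S y) + card (nb d S y) + 1"
proof -
  have "S \<subseteq> insert y (nb a S y \<union> nb b S y \<union> nb d S y)"
  proof
    fix w assume w: "w \<in> S"
    show "w \<in> insert y (nb a S y \<union> nb b S y \<union> nb d S y)"
    proof (cases "w = y")
      case False
      then have "c y w < 3" using lt3 S w y by blast
      then have "c y w = a \<or> c y w = b \<or> c y w = d" using abd by linarith
      then show ?thesis using w False unfolding nb_def by auto
    qed simp
  qed
  then have "card S \<le> card (insert y (nb a S y \<union> nb b S y \<union> nb d S y))"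
    using nb_fin S by (intro card_mono) auto
  also have "\<dots> \<le> card (nb a S y \<union> nb b S y \<union> nb d S y) + 1"
    using nb_fin S by (simp add: card_insert_le_m1 card_insert_if)
  also have "\<dots> \<le> card (nb a S y) + card (nb b S y) + card (nb d S y) + 1"
    using card_Un_le[of "nb a S y \<union> nb b S y" "nb d S y"] card_Un_le[of "nb a S y" "nb b S y"] by linarith
  finally show ?thesis .
qed

lemma P1:
  assumes Y: "Y \<subseteq> {..<N}" and col: "a < 3" "k < 3" "k' < 3" "a \<noteq> k" "a \<noteq> k'" "k \<noteq> k'"
    and big: "5*n \<le> 2*card Y + 2*m + 1" and sp: "\<forall>y\<in>Y. card (nb a Y y) + 1 \<le> m"
    and u: "u \<in> Y" and cu: "card (nb k Y u) \<ge> n + m + 1"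
  shows False
proof -
  define X where "X = nb k Y u"
  have XY: "X \<subseteq> Y" unfolding X_def nb_def by auto
  have cY: "card Y \<ge> n + 3*m + 1" using big nm by linarith
  have lowk: "card (nb k Y v) \<le> m" if v: "v \<in> X" for v
  proof (rule ccontr)
    assume "\<not> ?thesis"
    then show False using F1[OF Y u v[unfolded X_def]] cu by linarith
  qed
  have highk': "card (nb k' Y v) \<ge> n + m + 1" if v: "v \<in> X" for v
  proof -
    have "card Y \<le> card (nb a Y v) + card (nb k Y v) + card (nb k' Y v) + 1"
      using cover[OF Y _ col] v XY by blast
    then show ?thesis using lowk[OF v] sp v XY cY by fastforce
  qed
  have nok': "c v v' \<noteq> k'" if "v \<in> X" "v' \<in> X" "v \<noteq> v'" for v v'
  proof
    assume "c v v' = k'"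
    then have "v' \<in> nb k' Y v" using that XY unfolding nb_def by auto
    then show False using F1[OF Y _ _ highk'[OF that(1)]] highk'[OF that(2)] that XY by fastforce
  qed
  have "X \<noteq> {}" using cu X_def by auto
  then obtain v where v: "v \<in> X" by blast
  have "X - {v} \<subseteq> nb a Y v \<union> nb k Y v"
  proof
    fix w assume w: "w \<in> X - {v}"
    then have "c v w < 3" using lt3 Y XY v by blast
    then have "c v w = a \<or> c v w = k" using nok'[of v w] w v col by auto
    then show "w \<in> nb a Y v \<union> nb k Y v" using w XY unfolding nb_def by auto
  qed
  then have "card (X - {v}) \<le> card (nb a Y v \<union> nb k Y v)" using nb_fin Y by (intro card_mono) auto
  also have "\<dots> \<le> card (nb a Y v) + card (nb k Y v)" by (rule card_Un_le)
  moreover have "card (nb a Y v) + 1 \<le> m" using sp v XY by auto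
  moreover have "card (X - {v}) = card X - 1" using v nb_fin[OF Y] X_def by (simp add: card_Diff_singleton)
  moreover have "card X \<ge> n + m + 1" using cu X_def by simp
  ultimately show False using nm lowk[OF v] by linarith
qed

end

lemma cm1: "finite S \<Longrightarrow> x \<in> S \<Longrightarrow> card (S - {x}) + 1 = card S"
  using card_Suc_Diff1 by fastforce

context G2 begin

lemma P:
  assumes Y: "Y \<subseteq> {..<N}" and col: "a < 3" "k < 3" "k' < 3" "a \<noteq> k" "a \<noteq> k'" "k \<noteq> k'"
    and big: "5*n \<le> 2*card Y + 2*m + 1" and sp: "\<forall>y\<in>Y. card (nb a Y y) + 1 \<le> m"
  shows False
proof -
  have finY: "finite Y" using Y finite_subset by blast
  have cY: "card Y \<ge> 2*n + 2*m + 2" using big nm by linarith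
  define q where "q = card Y - (n + 2*m)"
  have q: "q \<ge> n + 2" "card Y = q + n + 2*m" using cY q_def by auto
  have col': "a < 3" "k' < 3" "k < 3" "a \<noteq> k'" "a \<noteq> k" "k' \<noteq> k" using col by auto
  have lo: "card (nb k Y y) \<ge> q \<and> card (nb k' Y y) \<ge> q" if y: "y \<in> Y" for y
  proof -
    have u1: "card (nb k Y y) \<le> n + m"
    proof (rule ccontr)
      assume "\<not> card (nb k Y y) \<le> n + m"
      then show False using P1[OF Y col big sp y] by linarith
    qed
    have u2: "card (nb k' Y y) \<le> n + m"
    proof (rule ccontr)
      assume "\<not> card (nb k' Y y) \<le> n + m"
      then show False using P1[OF Y col' big sp y] by linarith
    qed
    have "card Y \<le> card (nb a Y y) + card (nb k Y y) + card (nb k' Y y) + 1"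
      using cover[OF Y y col] .
    moreover have "card (nb a Y y) + 1 \<le> m" using sp y by auto
    ultimately show ?thesis using u1 u2 q by linarith
  qed
  have "Y \<noteq> {}" using cY by auto
  then obtain u where u: "u \<in> Y" by blast
  define X where "X = nb k Y u"
  define Z where "Z = Y - X - {u}"
  have XY: "X \<subseteq> Y" "u \<notin> X" unfolding X_def nb_def by auto
  have finX: "finite X" "finite Z" using XY finY Z_def finite_subset by auto
  have cZ: "card Z + card X + 1 = card Y"
  proof -
    have "Z = Y - insert u X" using Z_def by auto
    moreover have "insert u X \<subseteq> Y" using XY u by auto
    moreover have "finite (insert u X)" using finX by simp
    ultimately have "card Z = card Y - card (insert u X)" using card_Diff_subset by metis
    moreover have "card (insert u X) = card X + 1" using finX XY by simp
    moreover have "card (insert u X) \<le> card Y" using \<open>insert u X \<subseteq> Y\<close> finY by (rule card_mono[rotated])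
    ultimately show ?thesis by linarith
  qed
  have cX: "card X \<ge> q" using lo[OF u] X_def by simp
  have hZ: "card (nb k' Y v \<inter> Z) \<ge> q" if v: "v \<in> X" for v
  proof -
    define A where "A = X - {v}"
    define B where "B = nb k Y v - {u}"
    define C where "C = nb k Y v \<inter> Z"
    have vY: "v \<in> Y" using v XY by auto
    have uv: "u \<in> nb k Y v"
    proof -
      have "u \<noteq> v" "c u v = k" using v X_def unfolding nb_def by auto
      then have "c v u = k" using sym u vY Y by (metis lessThan_iff subsetD)
      then show ?thesis using u \<open>u \<noteq> v\<close> unfolding nb_def by auto
    qed
    have cA: "card A + 1 = card X" unfolding A_def by (rule cm1[OF finX(1) v])
    have cB: "card B + 1 = card (nb k Y v)" unfolding B_def by (rule cm1[OF nb_fin[OF Y] uv])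
    have finAB: "finite A" "finite B" "finite C" using A_def B_def C_def finX nb_fin[OF Y] by auto
    have AB: "\<not> card (A \<union> B) \<ge> n + m"
    proof
      assume h: "card (A \<union> B) \<ge> n + m"
      have s1: "A \<subseteq> nb k Y u - {v}" using A_def X_def by auto
      have s2: "B \<subseteq> nb k Y v - {u}" using B_def by auto
      have c1: "card A \<ge> n" using cA cX q by linarith
      have c2: "card B \<ge> m" using cB lo[OF vY] q nm by linarith
      show False using DSU'[OF Y u v[unfolded X_def] s1 s2 c1 c2 h] .
    qed
    have "card (A \<union> C) \<le> card (A \<union> B)"
      using finAB by (intro card_mono) (auto simp: B_def C_def Z_def)
    moreover have "card (A \<union> C) = card A + card C"
      using finAB by (intro card_Un_disjoint) (auto simp: A_def C_def Z_def)
    ultimately have ac: "card A + card C + 1 \<le> n + m" using AB by linarith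
    have "Z \<subseteq> (nb a Y v \<union> C) \<union> (nb k' Y v \<inter> Z)"
    proof
      fix z assume z: "z \<in> Z"
      then have zY: "z \<in> Y" "z \<noteq> v" using Z_def v by auto
      then have "c v z < 3" using lt3 Y vY by blast
      then have "c v z = a \<or> c v z = k \<or> c v z = k'" using col by linarith
      then show "z \<in> (nb a Y v \<union> C) \<union> (nb k' Y v \<inter> Z)" using z zY unfolding C_def nb_def by auto
    qed
    then have "card Z \<le> card ((nb a Y v \<union> C) \<union> (nb k' Y v \<inter> Z))"
      using finAB nb_fin[OF Y] by (intro card_mono) auto
    also have "\<dots> \<le> card (nb a Y v) + card C + card (nb k' Y v \<inter> Z)"
      using card_Un_le[of "nb a Y v \<union> C" "nb k' Y v \<inter> Z"] card_Un_le[of "nb a Y v" C] by linarith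
    finally have "card Z \<le> card (nb a Y v) + card C + card (nb k' Y v \<inter> Z)" .
    moreover have "card (nb a Y v) + 1 \<le> m" using sp vY by auto
    ultimately show ?thesis using ac cA cZ q by linarith
  qed
  have eqZ: "nb k' Y v \<inter> Z = {z\<in>Z. c v z = k'}" if "v \<in> X" for v
    using that Z_def XY unfolding nb_def by auto
  have "\<exists>z\<in>Z. card {v\<in>X. c v z = k'} \<ge> m"
  proof (rule ccontr)
    assume "\<not> ?thesis"
    then have h: "\<forall>z\<in>Z. card {v\<in>X. c v z = k'} \<le> m - 1" by auto
    have hh: "\<And>v. v \<in> X \<Longrightarrow> q \<le> card {z\<in>Z. c v z = k'}" using hZ eqZ by metis
    have "card X * q \<le> (\<Sum>v\<in>X. card {z\<in>Z. c v z = k'})"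
      using sum_bounded_below[of X q "\<lambda>v. card {z\<in>Z. c v z = k'}", OF hh] by simp
    also have "\<dots> = (\<Sum>z\<in>Z. card {v\<in>X. c v z = k'})" by (rule dcount[OF finX])
    also have "\<dots> \<le> card Z * (m - 1)"
      using sum_bounded_above[of Z "\<lambda>z. card {v\<in>X. c v z = k'}" "m - 1"] h by simp
    finally have 1: "card X * q \<le> card Z * (m - 1)" .
    have "q * q \<le> card X * q" using cX by (intro mult_right_mono) auto
    also have "\<dots> \<le> card Z * (m - 1)" using 1 .
    also have "\<dots> \<le> (2*q + 2*m) * (m - 1)" using cZ q by (intro mult_right_mono) auto
    finally have qq: "q * q \<le> (2*q + 2*m) * (m - 1)" .
    have "q \<ge> 6*m+9" using q nm by linarith
    then show False using nonlin qq by blast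
  qed
  then obtain z where z: "z \<in> Z" "card {v\<in>X. c v z = k'} \<ge> m" by blast
  then have "{v\<in>X. c v z = k'} \<noteq> {}" using m1 by (metis card.empty le_zero_eq not_one_le_zero)
  then obtain v where v: "v \<in> X" "c v z = k'" by blast
  have vY: "v \<in> Y" and zY: "z \<in> Y" and vz: "v \<noteq> z" using v z XY Z_def by auto
  have zin: "z \<in> nb k' Y v" using zY vz v unfolding nb_def by auto
  define A where "A = nb k' Y v \<inter> Z - {z}"
  define B where "B = nb k' Y z - {v}"
  define W where "W = {v'\<in>X. c v' z = k'} - {v}"
  have finAB: "finite A" "finite B" "finite W" using A_def B_def W_def finX nb_fin[OF Y] by auto
  have cA: "card A + 1 \<ge> q"
  proof -
    have "finite (nb k' Y v \<inter> Z)" using finX by auto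
    moreover have "z \<in> nb k' Y v \<inter> Z" using zin z by auto
    ultimately have "card A + 1 = card (nb k' Y v \<inter> Z)" unfolding A_def by (intro cm1)
    then show ?thesis using hZ[OF v(1)] by linarith
  qed
  have cB: "card B + 1 \<ge> q"
  proof -
    have "c z v = k'" using v vY vz zY sym Y by (metis lessThan_iff subsetD)
    then have "v \<in> nb k' Y z" using vY vz unfolding nb_def by auto
    then have "card B + 1 = card (nb k' Y z)" unfolding B_def by (rule cm1[OF nb_fin[OF Y]])
    then show ?thesis using lo[OF zY] by linarith
  qed
  have cW: "card W + 1 \<ge> m"
  proof -
    have "finite {v\<in>X. c v z = k'}" using finX by auto
    moreover have "v \<in> {v\<in>X. c v z = k'}" using v by auto
    ultimately have "card W + 1 = card {v\<in>X. c v z = k'}" unfolding W_def by (rule cm1)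
    then show ?thesis using z(2) by linarith
  qed
  have WB: "W \<subseteq> B"
  proof
    fix w assume w: "w \<in> W"
    then have wX: "w \<in> X" "w \<noteq> v" "c w z = k'" using W_def by auto
    then have "w \<in> Y" "w \<noteq> z" using XY z Z_def by auto
    moreover have "c z w = k'" using sym wX \<open>w \<in> Y\<close> zY \<open>w \<noteq> z\<close> Y by (metis lessThan_iff subsetD)
    ultimately show "w \<in> B" using wX zY unfolding B_def nb_def by auto
  qed
  have "card (A \<union> W) = card A + card W"
    using finAB by (intro card_Un_disjoint) (auto simp: A_def W_def Z_def)
  moreover have "card (A \<union> W) \<le> card (A \<union> B)" using WB finAB by (intro card_mono) auto
  ultimately have "card (A \<union> B) \<ge> n + m" using cA cW q by linarith
  moreover have s1: "A \<subseteq> nb k' Y v - {z}" using A_def by auto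
  moreover have s2: "B \<subseteq> nb k' Y z - {v}" using B_def by auto
  moreover have c1: "card A \<ge> n" using cA q by linarith
  moreover have c2: "card B \<ge> m" using cB q nm by linarith
  ultimately show False using DSU'[OF Y vY zin s1 s2 c1 c2] by blast
qed

end


locale G3 = G2 +
  fixes g a b :: nat
  assumes cols: "g < 3" "a < 3" "b < 3" "a \<noteq> b" "a \<noteq> g" "b \<noteq> g"
  and disc: "\<forall>u<N. \<exists>w<N. w \<notin> comp g {..<N} u"
begin

abbreviation K where "K u \<equiv> comp g {..<N} u"

definition Xs :: "nat \<Rightarrow> nat \<Rightarrow> nat set" where
  "Xs k u = {w. w < N \<and> w \<notin> K u \<and> c u w = k}"

lemma Kin: "u < N \<Longrightarrow> u \<in> K u" using comp_in by simp

lemma KV: "u < N \<Longrightarrow> K u \<subseteq> {..<N}" using comp_sub by simp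

lemma Kfin: "u < N \<Longrightarrow> finite (K u)" using KV finite_subset by blast

lemma Keq: "u < N \<Longrightarrow> t \<in> K u \<Longrightarrow> K t = K u" using comp_eq by simp

lemma Ksym: "u < N \<Longrightarrow> w < N \<Longrightarrow> w \<notin> K u \<Longrightarrow> u \<notin> K w"
  using Keq Kin by metis

lemma Kdisj: "u < N \<Longrightarrow> w < N \<Longrightarrow> w \<notin> K u \<Longrightarrow> t \<in> K w \<Longrightarrow> t \<notin> K u"
  using comp_disj[of "{..<N}" u w g t] by simp

lemma col3: "x < N \<Longrightarrow> y < N \<Longrightarrow> x \<noteq> y \<Longrightarrow> c x y = a \<or> c x y = b \<or> c x y = g"
  using lt3[of x y] cols by linarith

lemma cross: "u < N \<Longrightarrow> w < N \<Longrightarrow> w \<notin> K u \<Longrightarrow> c u w = a \<or> c u w = b"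
proof -
  assume h: "u < N" "w < N" "w \<notin> K u"
  then have "c u w \<noteq> g" using comp_cross[of u "{..<N}" w g] by simp
  moreover have "u \<noteq> w" using h Kin by auto
  ultimately show ?thesis using col3 h by blast
qed

lemma Kmod: "u < N \<Longrightarrow> w < N \<Longrightarrow> w \<notin> K u \<Longrightarrow> t \<in> K u \<Longrightarrow> c w t = c w u"
  using module[of "{..<N}" u w g t u] Kin by simp

lemma symc: "x < N \<Longrightarrow> y < N \<Longrightarrow> x \<noteq> y \<Longrightarrow> c x y = c y x" using sym by blast

lemma Xs_sub: "Xs k u \<subseteq> {..<N}" unfolding Xs_def by auto
lemma Xs_fin: "finite (Xs k u)" using Xs_sub finite_subset by blast

lemma Xs_nb: "u < N \<Longrightarrow> Xs k u \<subseteq> nb k {..<N} u"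
  unfolding Xs_def nb_def using Kin by auto

lemma Xs_part:
  assumes u: "u < N" and kk: "k = a \<and> k' = b \<or> k = b \<and> k' = a"
  shows "card (K u) + card (Xs k u) + card (Xs k' u) = N"
proof -
  have "{..<N} = K u \<union> (Xs k u \<union> Xs k' u)"
    using KV[OF u] cross[OF u] kk unfolding Xs_def by auto
  moreover have "card (K u \<union> (Xs k u \<union> Xs k' u)) = card (K u) + card (Xs k u \<union> Xs k' u)"
    using Kfin[OF u] Xs_fin by (intro card_Un_disjoint) (auto simp: Xs_def)
  moreover have "card (Xs k u \<union> Xs k' u) = card (Xs k u) + card (Xs k' u)"
    using Xs_fin kk cols by (intro card_Un_disjoint) (auto simp: Xs_def)
  ultimately show ?thesis by (metis card_lessThan add.assoc)
qed

lemma K_in_Xs: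
  assumes u: "u < N" and w: "w < N" "w \<notin> K u"
  shows "K u \<subseteq> Xs (c w u) w"
proof
  fix t assume t: "t \<in> K u"
  have "t \<notin> K w" using Kdisj[OF w(1) u Ksym[OF u w] t] .
  moreover have "c w t = c w u" using Kmod[OF u w t] .
  moreover have "t < N" using KV[OF u] t by auto
  ultimately show "t \<in> Xs (c w u) w" unfolding Xs_def by auto
qed

lemma Xs_same:
  assumes u: "u < N" and t: "t \<in> K u"
  shows "Xs k t = Xs k u"
proof -
  have KtKu: "K t = K u" using Keq u t by auto
  have tN: "t < N" using KV[OF u] t by auto
  have "c t w = c u w" if "w < N" "w \<notin> K u" for w
  proof -
    have "c w t = c w u" using Kmod[OF u that t] .
    moreover have "t \<noteq> w" "u \<noteq> w" using that t u Kin by auto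
    ultimately show ?thesis using symc tN u that by metis
  qed
  then show ?thesis unfolding Xs_def using KtKu by auto
qed

lemma Xs_union:
  assumes u: "u < N" and w: "w \<in> Xs k u"
  shows "K w \<subseteq> Xs k u"
proof
  fix t assume t: "t \<in> K w"
  have wN: "w < N" "w \<notin> K u" "c u w = k" using w unfolding Xs_def by auto
  have tN: "t < N" using KV[OF wN(1)] t by auto
  have "t \<notin> K u" using Kdisj[OF u wN(1) wN(2) t] .
  moreover have "c u t = c u w" using Kmod[OF wN(1) u Ksym[OF u wN(1) wN(2)] t] .
  ultimately show "t \<in> Xs k u" using tN wN unfolding Xs_def by auto
qed

lemma L1:
  assumes u: "u < N" and cK: "card (K u) \<ge> m + 1" and cX: "card (Xs k u) \<ge> n + 1"
  shows False
proof -
  have "Xs k u \<noteq> {}" using cX by auto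
  then obtain v where v: "v \<in> Xs k u" by blast
  have vN: "v < N" "v \<notin> K u" "c u v = k" using v unfolding Xs_def by auto
  have uv: "u \<noteq> v" using vN Kin[OF u] by auto
  define A where "A = Xs k u - {v}"
  define B where "B = K u - {u}"
  have A: "A \<subseteq> nb k {..<N} u - {v}" using Xs_nb[OF u] A_def by auto
  have B: "B \<subseteq> nb k {..<N} v - {u}"
  proof
    fix t assume t: "t \<in> B"
    then have tK: "t \<in> K u" "t \<noteq> u" using B_def by auto
    have tN: "t < N" using KV[OF u] tK by auto
    have "c v t = c v u" using Kmod[OF u vN(1) vN(2) tK(1)] .
    also have "\<dots> = k" using symc[OF vN(1) u] uv vN by auto
    finally show "t \<in> nb k {..<N} v - {u}" using tN tK vN unfolding nb_def by auto
  qed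
  have cA: "card A + 1 = card (Xs k u)" unfolding A_def by (rule cm1[OF Xs_fin v])
  have cB: "card B + 1 = card (K u)" unfolding B_def by (rule cm1[OF Kfin[OF u] Kin[OF u]])
  have "card (A \<union> B) = card A + card B"
    using Xs_fin Kfin[OF u] by (intro card_Un_disjoint) (auto simp: A_def B_def Xs_def)
  then show False using DSU[OF u vN(1) uv vN(3) A B] cA cB cK cX by linarith
qed

lemma L2:
  assumes u: "u < N" and cu: "card (Xs k u) \<ge> n + m + 1" and v: "v \<in> Xs k u"
    and cv: "card (Xs k v) \<ge> m + 1"
  shows False
proof -
  have vN: "v < N" using v Xs_sub by auto
  have "card (Xs k u) \<le> card (nb k {..<N} u)" using Xs_nb[OF u] nb_fin by (intro card_mono) auto
  moreover have "card (Xs k v) \<le> card (nb k {..<N} v)" using Xs_nb[OF vN] nb_fin by (intro card_mono) auto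
  moreover have "v \<in> nb k {..<N} u" using Xs_nb[OF u] v by auto
  ultimately show False using F1[of "{..<N}" u v k] u cu cv by auto
qed

end

context G3 begin

lemma hk:
  assumes u: "u < N" and cK: "card (K u) \<ge> n + m + 1" and w: "w \<in> Xs k u" and y: "y \<in> K u"
  shows "card (nb k {..<N} y) \<le> m"
proof (rule ccontr)
  assume h: "\<not> ?thesis"
  have wN: "w < N" "w \<notin> K u" "c u w = k" using w unfolding Xs_def by auto
  have "c w u = k" using symc[OF wN(1) u] wN Kin[OF u] by auto
  then have sub: "K u \<subseteq> nb k {..<N} w" using K_in_Xs[OF u wN(1) wN(2)] Xs_nb[OF wN(1)] by auto
  then have "card (K u) \<le> card (nb k {..<N} w)" using nb_fin by (intro card_mono) auto
  moreover have "y \<in> nb k {..<N} w" using sub y by auto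
  ultimately show False using F1[of "{..<N}" w y k] wN cK h by auto
qed

lemma one_side:
  assumes u: "u < N" and cK: "card (K u) \<ge> n + m + 1"
    and kk: "k = a \<and> k' = b \<or> k = b \<and> k' = a" and e: "Xs k' u = {}"
  shows False
proof -
  obtain w where w: "w < N" "w \<notin> K u" using disc u by blast
  have "c u w = k" using cross[OF u w] e kk w unfolding Xs_def by auto
  then have wX: "w \<in> Xs k u" using w unfolding Xs_def by auto
  have "card (Xs k u) \<le> card (nb k {..<N} u)" using Xs_nb[OF u] nb_fin by (intro card_mono) auto
  also have "\<dots> \<le> m" using hk[OF u cK wX Kin[OF u]] .
  finally have cX: "card (Xs k u) \<le> m" .
  have "card (K u) + card (Xs k u) + card (Xs k' u) = N" using Xs_part[OF u kk] .
  then have cKu: "card (K u) + m \<ge> N" using e cX by auto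
  have sp: "\<forall>y\<in>K u. card (nb k (K u) y) + 1 \<le> m"
  proof
    fix y assume y: "y \<in> K u"
    have yN: "y < N" using KV[OF u] y by auto
    have "c w y = c w u" using Kmod[OF u w y] .
    moreover have "c w u = k" using symc[OF w(1) u] \<open>c u w = k\<close> w Kin[OF u] by auto
    moreover have "w \<noteq> y" using w y by auto
    ultimately have cyw: "c y w = k" using symc[OF yN w(1)] by auto
    have "insert w (nb k (K u) y) \<subseteq> nb k {..<N} y"
      using cyw w KV[OF u] y \<open>w \<noteq> y\<close> unfolding nb_def by auto
    then have "card (insert w (nb k (K u) y)) \<le> card (nb k {..<N} y)"
      using nb_fin by (intro card_mono) auto
    moreover have "card (insert w (nb k (K u) y)) = card (nb k (K u) y) + 1"
      using nb_fin[OF KV[OF u]] w unfolding nb_def by auto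
    ultimately show "card (nb k (K u) y) + 1 \<le> m" using hk[OF u cK wX y] by linarith
  qed
  have colk: "k < 3" "k' < 3" "g < 3" "k \<noteq> k'" "k \<noteq> g" "k' \<noteq> g" using kk cols by auto
  have "5*n \<le> 2*card (K u) + 2*m + 1" using cKu numfacts by linarith
  then show False using P[OF KV[OF u] colk _ sp] by blast
qed

lemma case1:
  assumes u: "u < N" and cK: "card (K u) \<ge> n + m + 1"
  shows False
proof -
  consider "Xs a u = {}" | "Xs b u = {}" | "Xs a u \<noteq> {}" "Xs b u \<noteq> {}" by blast
  then show False
  proof cases
    case 1 then show False using one_side[OF u cK, of b a] by blast
  next
    case 2 then show False using one_side[OF u cK, of a b] by blast
  next
    case 3
    obtain wa where wa: "wa \<in> Xs a u" using 3 by blast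
    obtain wb where wb: "wb \<in> Xs b u" using 3 by blast
    have lowg: "card (nb g {..<N} y) \<ge> n + m + 1" if y: "y \<in> K u" for y
    proof -
      have yN: "y < N" using KV[OF u] y by auto
      have "N \<le> card (nb a {..<N} y) + card (nb b {..<N} y) + card (nb g {..<N} y) + 1"
        using cover[of "{..<N}" y a b g] yN cols by auto
      then show ?thesis using hk[OF u cK wa y] hk[OF u cK wb y] numfacts by linarith
    qed
    have "nb g {..<N} u \<noteq> {}" using lowg[OF Kin[OF u]] by auto
    then obtain y where y: "y \<in> nb g {..<N} u" by blast
    have yK: "y \<in> K u"
    proof (rule ccontr)
      assume "y \<notin> K u"
      then have "c u y = a \<or> c u y = b" using cross[OF u] y unfolding nb_def by auto
      then show False using y cols unfolding nb_def by auto
    qed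
    show False using F1[of "{..<N}" u y g] u y lowg[OF Kin[OF u]] lowg[OF yK] by auto
  qed
qed

lemma card_diff2:
  assumes "finite S" "finite A" "finite B"
  shows "card S \<le> card (S - A - B) + card A + card B"
proof -
  have "S \<subseteq> (S - A - B) \<union> A \<union> B" by auto
  then have "card S \<le> card ((S - A - B) \<union> A \<union> B)" using assms by (intro card_mono) auto
  also have "\<dots> \<le> card (S - A - B) + card A + card B"
    using card_Un_le[of "(S - A - B) \<union> A" B] card_Un_le[of "S - A - B" A] by linarith
  finally show ?thesis .
qed

lemma case2a_sub:
  assumes j: "j < N" and small: "\<forall>u<N. card (K u) \<le> n + m"
    and kk: "k = a \<and> k' = b \<or> k = b \<and> k' = a" and cj: "card (Xs k j) \<ge> n + m + 1"
  shows False
proof -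
  have kk': "k' = a \<and> k = b \<or> k' = b \<and> k = a" using kk by auto
  have props: "card (Xs k v) \<le> m \<and> card (K v) \<le> m \<and> card (Xs k' v) \<ge> n + m + 1"
    if v: "v \<in> Xs k j" for v
  proof -
    have vN: "v < N" using v Xs_sub by auto
    have r1: "card (Xs k v) \<le> m"
    proof (rule ccontr)
      assume "\<not> ?thesis" then show False using L2[OF j cj v] by linarith
    qed
    have pt: "card (K v) + card (Xs k v) + card (Xs k' v) = N" using Xs_part[OF vN kk] .
    have r2: "card (K v) \<le> m"
    proof (rule ccontr)
      assume h: "\<not> ?thesis"
      have "card (K v) \<le> n + m" using small vN by auto
      then have "card (Xs k' v) \<ge> n + 1" using pt r1 numfacts by linarith
      moreover have "card (K v) \<ge> m + 1" using h by linarith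
      ultimately show False using L1[OF vN] by blast
    qed
    show ?thesis using r1 r2 pt numfacts by linarith
  qed
  have "Xs k j \<noteq> {}" using cj by auto
  then obtain v where v: "v \<in> Xs k j" by blast
  have vN: "v < N" using v Xs_sub by auto
  have "card (Xs k j) \<le> card (Xs k j - K v - Xs k v) + card (K v) + card (Xs k v)"
    by (rule card_diff2[OF Xs_fin Kfin[OF vN] Xs_fin])
  moreover have "card (Xs k v) \<le> m" "card (K v) \<le> m" using props[OF v] by auto
  ultimately have "card (Xs k j - K v - Xs k v) \<ge> 1" using cj nm by linarith
  then obtain v' where v': "v' \<in> Xs k j - K v - Xs k v"
    by (metis card.empty ex_in_conv not_one_le_zero)
  have v'N: "v' < N" "v' \<in> Xs k j" "v' \<notin> K v" "v' \<notin> Xs k v" using v' Xs_sub by auto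
  have "c v v' \<noteq> k" using v'N unfolding Xs_def by auto
  then have "c v v' = k'" using cross[OF vN v'N(1) v'N(3)] kk by auto
  then have "v' \<in> Xs k' v" using v'N unfolding Xs_def by auto
  moreover have "card (Xs k' v) \<ge> n + m + 1" using props[OF v] by blast
  moreover have "card (Xs k' v') \<ge> m + 1" using props[OF v'N(2)] by linarith
  ultimately show False using L2[OF vN] by blast
qed

lemma case2a:
  assumes j: "j < N" and cj: "card (K j) \<le> m" and small: "\<forall>u<N. card (K u) \<le> n + m"
  shows False
proof -
  have "card (K j) + card (Xs a j) + card (Xs b j) = N" using Xs_part[OF j, of a b] by auto
  then have "card (Xs a j) \<ge> n + m + 1 \<or> card (Xs b j) \<ge> n + m + 1" using cj numfacts by linarith
  then show False
  proof
    assume "card (Xs a j) \<ge> n + m + 1" then show False using case2a_sub[OF j small, of a b] by blast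
  next
    assume "card (Xs b j) \<ge> n + m + 1" then show False using case2a_sub[OF j small, of b a] by blast
  qed
qed

end

context G3 begin

lemma case2b:
  assumes large: "\<forall>u<N. card (K u) \<ge> m + 1"
  shows False
proof -
  have s1: "card (Xs k u) \<le> n" if "u < N" for u k
  proof (rule ccontr)
    assume "\<not> ?thesis"
    then have "card (Xs k u) \<ge> n + 1" by linarith
    moreover have "card (K u) \<ge> m + 1" using large that by blast
    ultimately show False using L1[OF that] by blast
  qed
  have s2: "card (K u) + 2*n \<ge> N" if u: "u < N" for u
    using Xs_part[OF u, of a b] s1[OF u, of a] s1[OF u, of b] by auto
  have pair: "card (K u) + card (K w) \<le> n" if u: "u < N" and w: "w < N" "w \<notin> K u" for u w
  proof -
    have uw: "u \<notin> K w" using Ksym[OF u w] .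
    have "\<exists>x<N. x \<notin> K u \<and> x \<notin> K w \<and> c x u = c x w"
    proof (rule ccontr)
      assume no: "\<not> ?thesis"
      define k where "k = c u w"
      have ku: "k = a \<or> k = b" using cross[OF u w] k_def by auto
      have "{..<N} \<subseteq> Xs k u \<union> Xs k w"
      proof
        fix x assume "x \<in> {..<N}"
        then have xN: "x < N" by auto
        show "x \<in> Xs k u \<union> Xs k w"
        proof (cases "x \<in> K u")
          case True
          have "c w u = k" using k_def symc[OF w(1) u] w Kin[OF u] by auto
          then show ?thesis using K_in_Xs[OF u w] True by auto
        next
          case False
          note xu = False
          show ?thesis
          proof (cases "x \<in> K w")
            case True
            then show ?thesis using K_in_Xs[OF w(1) u uw] True k_def by auto
          next
            case False
            have ne: "c x u \<noteq> c x w" using no xN xu False by auto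
            have c1: "c x u = a \<or> c x u = b" using cross[OF xN u Ksym[OF u xN xu]] .
            have c2: "c x w = a \<or> c x w = b" using cross[OF xN w(1) Ksym[OF w(1) xN False]] .
            have "c x u = k \<or> c x w = k" using ne c1 c2 ku by auto
            moreover have "x \<noteq> u" "x \<noteq> w" using xu False Kin u w by auto
            ultimately have "c u x = k \<or> c w x = k" using symc xN u w by metis
            then show ?thesis using xN xu False unfolding Xs_def by auto
          qed
        qed
      qed
      then have "card {..<N} \<le> card (Xs k u \<union> Xs k w)" using Xs_fin by (intro card_mono) auto
      also have "\<dots> \<le> card (Xs k u) + card (Xs k w)" by (rule card_Un_le)
      finally show False using s1[OF u, of k] s1[OF w(1), of k] numfacts by simp
    qed
    then obtain x where x: "x < N" "x \<notin> K u" "x \<notin> K w" "c x u = c x w" by blast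
    have "K u \<union> K w \<subseteq> Xs (c x u) x"
      using K_in_Xs[OF u x(1) x(2)] K_in_Xs[OF w(1) x(1) x(3)] x(4) by auto
    then have "card (K u \<union> K w) \<le> card (Xs (c x u) x)" using Xs_fin by (intro card_mono) auto
    moreover have "card (K u \<union> K w) = card (K u) + card (K w)"
      using Kfin u w Kdisj[OF u w(1) w(2)] by (intro card_Un_disjoint) auto
    ultimately show ?thesis using s1[OF x(1), of "c x u"] by linarith
  qed
  have bound: "card (Xs k u) \<le> 2 * X" if u: "u < N" and hX: "\<forall>x\<in>Xs k u. card (K x) \<le> X" for u k X
  proof (cases "Xs k u = {}")
    case True then show ?thesis by simp
  next
    case False
    then obtain x1 where x1: "x1 \<in> Xs k u" by blast
    have x1N: "x1 < N" using x1 Xs_sub by auto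
    show ?thesis
    proof (cases "Xs k u \<subseteq> K x1")
      case True
      then have "card (Xs k u) \<le> card (K x1)" using Kfin[OF x1N] by (intro card_mono)
      then show ?thesis using hX x1 by fastforce
    next
      case False
      then obtain x2 where x2: "x2 \<in> Xs k u" "x2 \<notin> K x1" by blast
      have x2N: "x2 < N" using x2 Xs_sub by auto
      show ?thesis
      proof (cases "Xs k u \<subseteq> K x1 \<union> K x2")
        case True
        then have "card (Xs k u) \<le> card (K x1 \<union> K x2)" using Kfin x1N x2N by (intro card_mono) auto
        also have "\<dots> \<le> card (K x1) + card (K x2)" by (rule card_Un_le)
        finally have "card (Xs k u) \<le> card (K x1) + card (K x2)" .
        moreover have "card (K x1) \<le> X" "card (K x2) \<le> X" using hX x1 x2 by auto
        ultimately show ?thesis by linarith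
      next
        case False
        then obtain x3 where x3: "x3 \<in> Xs k u" "x3 \<notin> K x1" "x3 \<notin> K x2" by blast
        have x3N: "x3 < N" using x3 Xs_sub by auto
        have sub: "K x1 \<union> K x2 \<union> K x3 \<subseteq> Xs k u" using Xs_union[OF u] x1 x2 x3 by auto
        have d12: "K x1 \<inter> K x2 = {}" using Kdisj[OF x1N x2N x2(2)] by auto
        have d13: "(K x1 \<union> K x2) \<inter> K x3 = {}"
          using Kdisj[OF x1N x3N x3(2)] Kdisj[OF x2N x3N x3(3)] by auto
        have "card (K x1 \<union> K x2 \<union> K x3) = card (K x1) + card (K x2) + card (K x3)"
          using Kfin x1N x2N x3N d12 d13 by (simp add: card_Un_disjoint)
        moreover have "card (K x1 \<union> K x2 \<union> K x3) \<le> card (Xs k u)" using sub Xs_fin by (intro card_mono)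
        moreover have "card (Xs k u) \<le> n" using s1[OF u] .
        ultimately show ?thesis using s2[OF x1N] s2[OF x2N] s2[OF x3N] numfacts by linarith
      qed
    qed
  qed
  have fin: "finite ((\<lambda>u. card (K u)) ` {..<N})" by auto
  have "0 \<in> {..<N}" using numfacts by simp
  then have ne: "(\<lambda>u. card (K u)) ` {..<N} \<noteq> {}" by blast
  obtain u where u: "u < N" "card (K u) = Max ((\<lambda>u. card (K u)) ` {..<N})"
    using Max_in[OF fin ne] by auto
  have umax: "card (K w) \<le> card (K u)" if "w < N" for w
    using Max_ge[OF fin] that u by auto
  define M where "M = card (K u)"
  define k0 where "k0 = n div 2"
  have nk: "(n = 2*k0 \<and> N = 5*k0 + 1) \<or> (n = 2*k0 + 1 \<and> N = 5*k0 + 2)"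
    using hN k0_def by (cases "even n") (auto elim!: evenE oddE)
  have xin: "\<And>x k. x \<in> Xs k u \<Longrightarrow> x < N \<and> x \<notin> K u" unfolding Xs_def by auto
  have part: "card (K u) + card (Xs a u) + card (Xs b u) = N" using Xs_part[OF u(1), of a b] by auto
  show False
  proof (cases "M \<le> k0")
    case True
    have "\<forall>x\<in>Xs k u. card (K x) \<le> k0" for k using umax xin True M_def by fastforce
    then have "card (Xs a u) \<le> 2*k0" "card (Xs b u) \<le> 2*k0" using bound[OF u(1)] by blast+
    then show False using part True M_def nk by linarith
  next
    case False
    have "\<forall>x\<in>Xs k u. card (K x) \<le> n - M" for k using pair[OF u(1)] xin M_def by fastforce
    then have "card (Xs a u) \<le> 2*(n - M)" "card (Xs b u) \<le> 2*(n - M)" using bound[OF u(1)] by blast+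
    moreover obtain w where "w < N" "w \<notin> K u" using disc u by blast
    then have "M \<le> n" using pair[OF u(1)] M_def by fastforce
    ultimately show False using part False M_def nk by linarith
  qed
qed

end


context G3 begin
lemma G3_false: False
proof (cases "\<exists>u<N. card (K u) \<ge> n + m + 1")
  case True then show False using case1 by blast
next
  case False
  then have small: "\<forall>u<N. card (K u) \<le> n + m" by auto
  show False
  proof (cases "\<exists>j<N. card (K j) \<le> m")
    case True then show False using case2a small by blast
  next
    case False
    then have "\<forall>u<N. card (K u) \<ge> m + 1" by auto
    then show False using case2b by blast
  qed
qed
end

context G2 begin
lemma G2_false: False
proof -
  have "2 \<le> card {..<N}" using numfacts by simp
  then obtain g T where gT: "g < 3" "T \<noteq> {}" "T \<subset> {..<N}" "closed g {..<N} T"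
    using gallai[of "{..<N}"] by auto
  have disc: "\<forall>u<N. \<exists>w<N. w \<notin> comp g {..<N} u"
    using disc_comp[OF _ gT(2) gT(3) gT(4)] by auto
  obtain a b where ab: "a < 3" "b < 3" "a \<noteq> b" "a \<noteq> g" "b \<noteq> g"
  proof -
    have "\<exists>a b. a < 3 \<and> b < (3::nat) \<and> a \<noteq> b \<and> a \<noteq> g \<and> b \<noteq> g"
    proof -
      consider "g = 0" | "g = 1" | "g = 2" using gT(1) by linarith
      then show ?thesis
      proof cases
        case 1 then show ?thesis by (intro exI[of _ 1] exI[of _ 2]) auto
      next
        case 2 then show ?thesis by (intro exI[of _ 0] exI[of _ 2]) auto
      next
        case 3 then show ?thesis by (intro exI[of _ 0] exI[of _ 1]) auto
      qed
    qed
    then show ?thesis using that by blast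
  qed
  interpret G3 N c n m g a b
    by unfold_locales (use gT(1) ab disc in auto)
  show False by (rule G3_false)
qed
end



definition blk :: "nat \<Rightarrow> nat \<Rightarrow> nat" where "blk k x = min (x div k) 4"

definition colr :: "nat \<Rightarrow> nat \<Rightarrow> nat \<Rightarrow> nat" where
  "colr k x y = (if blk k x = blk k y then 2
     else if (blk k x + 5 - blk k y) mod 5 = 1 \<or> (blk k x + 5 - blk k y) mod 5 = 4 then 0 else 1)"

lemma blk_le: "blk k x \<le> 4" unfolding blk_def by auto

lemma five: "(p::nat) \<le> 4 \<Longrightarrow> p = 0 \<or> p = 1 \<or> p = 2 \<or> p = 3 \<or> p = 4" by linarith

lemma sym5: "(p::nat) \<le> 4 \<Longrightarrow> q \<le> 4 \<Longrightarrow>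
   ((p + 5 - q) mod 5 = 1 \<or> (p + 5 - q) mod 5 = 4) = ((q + 5 - p) mod 5 = 1 \<or> (q + 5 - p) mod 5 = 4)"
  by (drule five, drule five) (elim disjE; simp)

lemma colr_sym: "colr k x y = colr k y x"
  unfolding colr_def using sym5[OF blk_le blk_le, of k x k y] by auto

lemma colr_lt: "colr k x y < 3" unfolding colr_def by auto

lemma colr_nr: "colr k x y = colr k y z \<or> colr k y z = colr k x z \<or> colr k x y = colr k x z"
proof -
  consider "blk k x = blk k y" | "blk k y = blk k z" | "blk k x = blk k z"
    | "blk k x \<noteq> blk k y" "blk k y \<noteq> blk k z" "blk k x \<noteq> blk k z" by blast
  then show ?thesis
  proof cases
    case 1 then have "colr k y z = colr k x z" unfolding colr_def by simp
    then show ?thesis by simp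
  next
    case 2 then have "colr k x y = colr k x z" unfolding colr_def by simp
    then show ?thesis by simp
  next
    case 3 then have "colr k x y = colr k z y" unfolding colr_def by simp
    then show ?thesis using colr_sym by metis
  next
    case 4 then have "colr k x y \<le> 1" "colr k y z \<le> 1" "colr k x z \<le> 1" unfolding colr_def by auto
    then show ?thesis by linarith
  qed
qed

lemma blk_cnt:
  assumes k: "k > 0" and L: "L \<le> 4*k + r"
  shows "card {w\<in>{..<L}. blk k w = j} \<le> (if j = 4 then r else k)"
proof (cases "j < 4")
  case True
  have "{w\<in>{..<L}. blk k w = j} \<subseteq> {j*k..<(j+1)*k}"
  proof
    fix w assume "w \<in> {w\<in>{..<L}. blk k w = j}"
    then have "min (w div k) 4 = j" unfolding blk_def by auto
    then have "w div k = j" using True by linarith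
    then have "\<not> w div k < j" "w div k < j + 1" by auto
    then show "w \<in> {j*k..<(j+1)*k}" using k by (auto simp: div_less_iff_less_mult)
  qed
  then have "card {w\<in>{..<L}. blk k w = j} \<le> card {j*k..<(j+1)*k}" by (intro card_mono) auto
  then show ?thesis using True by simp
next
  case False
  show ?thesis
  proof (cases "j = 4")
    case True
    have "{w\<in>{..<L}. blk k w = j} \<subseteq> {4*k..<L}"
    proof
      fix w assume "w \<in> {w\<in>{..<L}. blk k w = j}"
      then have "min (w div k) 4 = 4" "w < L" unfolding blk_def using True by auto
      then have "\<not> w div k < 4" by linarith
      then show "w \<in> {4*k..<L}" using k \<open>w < L\<close> by (auto simp: div_less_iff_less_mult)
    qed
    then have "card {w\<in>{..<L}. blk k w = j} \<le> card {4*k..<L}" by (intro card_mono) auto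
    then show ?thesis using True L by simp
  next
    case False
    then have "{w\<in>{..<L}. blk k w = j} = {}" using \<open>\<not> j < 4\<close> blk_le[of k] by (auto simp: le_less)
    then have "card {w\<in>{..<L}. blk k w = j} = 0" by (simp only: card.empty)
    then show ?thesis by (metis le0)
  qed
qed

definition J1 :: "nat \<Rightarrow> nat \<Rightarrow> nat" where
  "J1 p t = (if t = 2 then p else if t = 0 then (p+1) mod 5 else (p+2) mod 5)"
definition J2 :: "nat \<Rightarrow> nat \<Rightarrow> nat" where
  "J2 p t = (if t = 2 then (p+1) mod 5 else if t = 0 then (p+4) mod 5 else (p+3) mod 5)"

lemma J12: "p \<le> 4 \<Longrightarrow> J1 p t \<noteq> J2 p t"
  unfolding J1_def J2_def by (drule five) (elim disjE; simp)

lemma blocks_q: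
  assumes "p \<le> 4" "q \<le> 4"
    "(if p = q then 2 else if (p + 5 - q) mod 5 = 1 \<or> (p + 5 - q) mod 5 = 4 then 0 else 1) = (t::nat)"
  shows "q = J1 p t \<or> q = J2 p t"
proof -
  have t: "t = 0 \<or> t = 1 \<or> t = 2" using assms(3) by (auto split: if_splits)
  show ?thesis using five[OF assms(1)] five[OF assms(2)] t assms(3) unfolding J1_def J2_def
    by (elim disjE; simp)
qed

lemma two_blocks:
  "colr k u w = t \<Longrightarrow> blk k w = J1 (blk k u) t \<or> blk k w = J2 (blk k u) t"
  using blocks_q[OF blk_le blk_le] unfolding colr_def by blast



lemma deg:
  assumes k: "k > 0" and L: "L \<le> 4*k + r" and rk: "r \<ge> k" and N': "N' \<le> L"
  shows "card {w\<in>{..<N'}. w \<noteq> u \<and> colr k u w = t} \<le> k + r"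
proof -
  define j1 where "j1 = J1 (blk k u) t"
  define j2 where "j2 = J2 (blk k u) t"
  have j12: "j1 \<noteq> j2" using J12[OF blk_le] j1_def j2_def by auto
  have "{w\<in>{..<N'}. w \<noteq> u \<and> colr k u w = t} \<subseteq> {w\<in>{..<L}. blk k w = j1} \<union> {w\<in>{..<L}. blk k w = j2}"
    using two_blocks[of k u _ t] N' j1_def j2_def by auto
  then have "card {w\<in>{..<N'}. w \<noteq> u \<and> colr k u w = t} \<le> card ({w\<in>{..<L}. blk k w = j1} \<union> {w\<in>{..<L}. blk k w = j2})"
    by (intro card_mono) auto
  also have "\<dots> \<le> card {w\<in>{..<L}. blk k w = j1} + card {w\<in>{..<L}. blk k w = j2}" by (rule card_Un_le)
  also have "\<dots> \<le> (if j1 = 4 then r else k) + (if j2 = 4 then r else k)"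
    using blk_cnt[OF k L, of j1] blk_cnt[OF k L, of j2] by linarith
  also have "\<dots> \<le> k + r" using j12 rk by auto
  finally show ?thesis .
qed

lemma lower:
  fixes n m N' :: nat
  assumes nm: "n \<ge> 6 * m + 7"
    and N': "N' < (if even n then 5 * (n div 2) + 1 else 5 * ((n - 1) div 2) + 2)"
  shows "\<not> (\<forall>c. edge_coloring 3 N' c \<longrightarrow> has_rainbow_K3 N' c \<or> has_mono_double_star n m N' c)"
proof
  assume H: "\<forall>c. edge_coloring 3 N' c \<longrightarrow> has_rainbow_K3 N' c \<or> has_mono_double_star n m N' c"
  define k where "k = n div 2"
  define r where "r = n - k"
  have kr: "k > 0" "r \<ge> k" "k + r = n" "N' \<le> 4*k + r" using nm N' k_def r_def
    by (cases "even n"; auto elim!: evenE oddE)+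
  have ec: "edge_coloring 3 N' (colr k)" unfolding edge_coloring_def using colr_sym colr_lt by auto
  have nr: "\<not> has_rainbow_K3 N' (colr k)" unfolding has_rainbow_K3_def using colr_nr by blast
  have "\<not> has_mono_double_star n m N' (colr k)"
  proof
    assume "has_mono_double_star n m N' (colr k)"
    then obtain u v A where uv: "u < N'" "v < N'" "u \<noteq> v" "A \<subseteq> {..<N'}" "card A = n"
      "u \<notin> A" "v \<notin> A" "\<forall>a\<in>A. colr k u a = colr k u v"
      unfolding has_mono_double_star_def by blast
    have "insert v A \<subseteq> {w\<in>{..<N'}. w \<noteq> u \<and> colr k u w = colr k u v}" using uv by auto
    then have "card (insert v A) \<le> card {w\<in>{..<N'}. w \<noteq> u \<and> colr k u w = colr k u v}"
      by (intro card_mono) auto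
    also have "\<dots> \<le> k + r" using deg[OF kr(1) order_refl kr(2) kr(4)] .
    finally have "card (insert v A) \<le> n" using kr by linarith
    moreover have "card (insert v A) = n + 1" using uv finite_subset[OF uv(4)] by auto
    ultimately show False by linarith
  qed
  then show False using H ec nr by blast
qed

theorem proposition1:
  fixes n m :: nat
  assumes "m \<ge> 1" and "n \<ge> 6 * m + 7"
  shows "gr_K3_double_star 3 n m =
           (if even n then 5 * (n div 2) + 1 else 5 * ((n - 1) div 2) + 2)"
proof -
  define N0 where "N0 = (if even n then 5 * (n div 2) + 1 else 5 * ((n - 1) div 2) + 2)"
  have up: "\<forall>c. edge_coloring 3 N0 c \<longrightarrow> has_rainbow_K3 N0 c \<or> has_mono_double_star n m N0 c"
  proof (intro allI impI)
    fix c assume ec: "edge_coloring 3 N0 c"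
    show "has_rainbow_K3 N0 c \<or> has_mono_double_star n m N0 c"
    proof (rule ccontr)
      assume h: "\<not> (has_rainbow_K3 N0 c \<or> has_mono_double_star n m N0 c)"
      interpret G2 N0 c n m
      proof unfold_locales
        fix x y assume "x < N0" "y < N0" "x \<noteq> y"
        then show "c x y = c y x" "c x y < 3" using ec unfolding edge_coloring_def by auto
      next
        fix x y z assume "x < N0" "y < N0" "z < N0" "x \<noteq> y" "y \<noteq> z" "x \<noteq> z"
        then show "c x y = c y z \<or> c y z = c x z \<or> c x y = c x z"
          using h unfolding has_rainbow_K3_def by blast
      qed (use h assms N0_def in auto)
      show False by (rule G2_false)
    qed
  qed
  have "(LEAST N. \<forall>c. edge_coloring 3 N c \<longrightarrow> has_rainbow_K3 N c \<or> has_mono_double_star n m N c) = N0"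
  proof (rule Least_equality)
    show "\<forall>c. edge_coloring 3 N0 c \<longrightarrow> has_rainbow_K3 N0 c \<or> has_mono_double_star n m N0 c" by (rule up)
  next
    fix y assume "\<forall>c. edge_coloring 3 y c \<longrightarrow> has_rainbow_K3 y c \<or> has_mono_double_star n m y c"
    then show "N0 \<le> y" using lower[OF assms(2), of y] N0_def by (meson not_le)
  qed
  then show ?thesis unfolding gr_K3_double_star_def N0_def by simp
qed


end
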